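(* Every digraph $D$ with minimum dicut size $2$ contains $2$ arc-disjoint dijoins.
   Context: Digraphs are finite and loopless; parallel arcs allowed. A dicut is $\delta^+_D(U)$ (arcs leaving $U$) with $\emptyset\neq U\subsetneq V$ and no arc entering $U$; a dijoin is an arc set meeting every dicut; "$D$ has minimum dicut size $\tau$" means $D$ has at least one dicut and the minimum number of arcs in a dicut is $\tau$. *)

theory Defs
  imports "Graph_Theory.Digraph"
begin

text \<open>Digraphs are finite, loopless, parallel arcs allowed: fin_digraph + loopfree_digraph
  from Graph_Theory (arcs are abstract objects with tail/head).\<close>

definition out_cut :: "('a,'b) pre_digraph \<Rightarrow> 'a set \<Rightarrow> 'b set" where
  "out_cut G U = {e \<in> arcs G. tail G e \<in> U \<and> head G e \<notin> U}"

definition is_dicut :: "('a,'b) pre_digraph \<Rightarrow> 'b set \<Rightarrow> bool" where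
  "is_dicut G C \<longleftrightarrow> (\<exists>U. U \<noteq> {} \<and> U \<subset> verts G
      \<and> (\<forall>e \<in> arcs G. \<not> (tail G e \<notin> U \<and> head G e \<in> U))
      \<and> C = out_cut G U)"

definition is_dijoin :: "('a,'b) pre_digraph \<Rightarrow> 'b set \<Rightarrow> bool" where
  "is_dijoin G J \<longleftrightarrow> J \<subseteq> arcs G \<and> (\<forall>C. is_dicut G C \<longrightarrow> J \<inter> C \<noteq> {})"

definition min_dicut_size :: "('a,'b) pre_digraph \<Rightarrow> nat \<Rightarrow> bool" where
  "min_dicut_size G \<tau> \<longleftrightarrow> (\<exists>C. is_dicut G C \<and> card C = \<tau>)
      \<and> (\<forall>C. is_dicut G C \<longrightarrow> \<tau> \<le> card C)"

end

theory Submission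
  imports Defs
begin

definition cross :: "'b set \<Rightarrow> ('b \<Rightarrow> 'a) \<Rightarrow> ('b \<Rightarrow> 'a) \<Rightarrow> 'a set \<Rightarrow> 'b set" where
  "cross E t h U = {e\<in>E. (t e \<in> U) \<noteq> (h e \<in> U)}"

definition wfg :: "'a set \<Rightarrow> 'b set \<Rightarrow> ('b \<Rightarrow> 'a) \<Rightarrow> ('b \<Rightarrow> 'a) \<Rightarrow> bool" where
  "wfg V E t h \<longleftrightarrow> (\<forall>e\<in>E. t e \<in> V \<and> h e \<in> V \<and> t e \<noteq> h e)"

definition twoec :: "'a set \<Rightarrow> 'b set \<Rightarrow> ('b \<Rightarrow> 'a) \<Rightarrow> ('b \<Rightarrow> 'a) \<Rightarrow> bool" where
  "twoec V E t h \<longleftrightarrow> (\<forall>U. U \<noteq> {} \<and> U \<subset> V \<longrightarrow> 2 \<le> card (cross E t h U))"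

definition ot :: "'b set \<Rightarrow> ('b \<Rightarrow> 'a) \<Rightarrow> ('b \<Rightarrow> 'a) \<Rightarrow> 'b \<Rightarrow> 'a" where
  "ot B t h e = (if e \<in> B then h e else t e)"

definition oh :: "'b set \<Rightarrow> ('b \<Rightarrow> 'a) \<Rightarrow> ('b \<Rightarrow> 'a) \<Rightarrow> 'b \<Rightarrow> 'a" where
  "oh B t h e = (if e \<in> B then t e else h e)"

definition strong :: "'a set \<Rightarrow> 'b set \<Rightarrow> 'b set \<Rightarrow> ('b \<Rightarrow> 'a) \<Rightarrow> ('b \<Rightarrow> 'a) \<Rightarrow> bool" where
  "strong V E B t h \<longleftrightarrow> (\<forall>W. W \<noteq> {} \<and> W \<subset> V \<longrightarrow> (\<exists>e\<in>E. ot B t h e \<in> W \<and> oh B t h e \<notin> W))"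

lemma finite_cross: "finite E \<Longrightarrow> finite (cross E t h U)"
  unfolding cross_def by auto

lemma submod_card:
  assumes "finite C" "finite D" "A \<union> B \<subseteq> C \<union> D" "A \<inter> B \<subseteq> C \<inter> D"
  shows "card A + card B \<le> card C + card D"
proof -
  have fA: "finite A" "finite B" using assms by (meson finite_Un finite_subset le_sup_iff)+
  have "card A + card B = card (A \<union> B) + card (A \<inter> B)" using fA card_Un_Int by blast
  also have "\<dots> \<le> card (C \<union> D) + card (C \<inter> D)"
    using assms by (intro add_mono card_mono) auto
  also have "\<dots> = card C + card D" using assms card_Un_Int by metis
  finally show ?thesis .
qed

lemma deg2:
  assumes fV: "finite V" and fE: "finite E" and wf: "wfg V E t h" and ec: "twoec V E t h"
    and c2: "card V \<ge> 2"
    and crit: "\<forall>e\<in>E. \<exists>U. U\<noteq>{} \<and> U\<subset>V \<and> card (cross E t h U) = 2 \<and> e \<in> cross E t h U"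
  shows "\<exists>x\<in>V. card (cross E t h {x}) = 2"
proof -
  let ?P = "\<lambda>U. U\<noteq>{} \<and> U\<subset>V \<and> card (cross E t h U) = 2"
  obtain v where v: "v \<in> V" using c2 by fastforce
  have "{v} \<subset> V"
  proof -
    have "V \<noteq> {v}" using c2 by auto
    then show ?thesis using v by auto
  qed
  then have "2 \<le> card (cross E t h {v})" using ec unfolding twoec_def by blast
  then obtain e where "e \<in> cross E t h {v}" by fastforce
  then have "e \<in> E" unfolding cross_def by auto
  then obtain U0 where "?P U0" using crit by blast
  then obtain U where PU: "?P U" and mn: "\<forall>U'. ?P U' \<longrightarrow> card U \<le> card U'"
    using ex_has_least_nat[of ?P U0 card] by blast
  have fU: "finite U" using PU fV finite_subset by blast
  have fcr: "\<And>X. finite (cross E t h X)" using fE finite_cross by blast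
  have ec': "\<And>X. X \<noteq> {} \<Longrightarrow> X \<subset> V \<Longrightarrow> 2 \<le> card (cross E t h X)" using ec unfolding twoec_def by blast
  show ?thesis
  proof (cases "card U = 1")
    case True
    then obtain x where "U = {x}" using card_1_singletonE by blast
    then show ?thesis using PU by auto
  next
    case False
    have "card U \<noteq> 0" using PU fU by simp
    then have "card U \<ge> 2" using False by arith
    then have "\<not> (\<forall>a1\<in>U. \<forall>a2\<in>U. a1 = a2)" using card_le_Suc0_iff_eq[OF fU] by auto
    then obtain u1 u2 where u: "u1 \<in> U" "u2 \<in> U" "u1 \<noteq> u2" by blast
    have inner: "\<exists>g\<in>E. t g \<in> U \<and> h g \<in> U"
    proof (rule ccontr)
      assume no: "\<not> ?thesis"
      have sub: "cross E t h {u} = cross E t h U" if "u \<in> U" for u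
      proof (rule card_seteq)
        show "finite (cross E t h U)" by (rule fcr)
        show "cross E t h {u} \<subseteq> cross E t h U"
          using no that unfolding cross_def by auto
        have "{u} \<subset> V" using that PU by auto
        then show "card (cross E t h U) \<le> card (cross E t h {u})" using ec' PU by auto
      qed
      have "cross E t h U \<noteq> {}" using PU by auto
      then obtain e where e: "e \<in> cross E t h U" by blast
      then have "e \<in> cross E t h {u1}" "e \<in> cross E t h {u2}" using sub u by auto
      then show False using no u(3) u(1,2) unfolding cross_def by auto
    qed
    then obtain g where g: "g \<in> E" "t g \<in> U" "h g \<in> U" by blast
    then obtain X where PX: "?P X" and gX: "g \<in> cross E t h X" using crit by blast
    have UX1: "U \<inter> X \<noteq> {}" and UX2: "U - X \<noteq> {}" using g gX unfolding cross_def by auto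
    have fX: "finite X" using PX fV finite_subset by blast
    show ?thesis
    proof (cases "U \<union> X = V")
      case False
      have s1: "U \<inter> X \<subset> V" "U \<union> X \<subset> V" using PU PX False by auto
      have "card (cross E t h (U \<inter> X)) + card (cross E t h (U \<union> X))
          \<le> card (cross E t h U) + card (cross E t h X)"
        by (rule submod_card[OF fcr fcr]) (auto simp: cross_def)
      then have "card (cross E t h (U \<inter> X)) \<le> 2"
        using PU PX ec'[OF _ s1(2)] UX1 by auto
      then have "?P (U \<inter> X)" using ec'[OF UX1 s1(1)] s1 UX1 by auto
      moreover have "card (U \<inter> X) < card U"
        using UX2 fU by (intro psubset_card_mono) auto
      ultimately have False using mn[rule_format, of "U \<inter> X"] by linarith
      then show ?thesis ..
    next
      case True
      have ne: "X - U \<noteq> {}" using True PU by auto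
      have s1: "U - X \<subset> V" "X - U \<subset> V" using PU PX True by auto
      have "card (cross E t h (U - X)) + card (cross E t h (X - U))
          \<le> card (cross E t h U) + card (cross E t h X)"
        by (rule submod_card[OF fcr fcr]) (auto simp: cross_def)
      then have "card (cross E t h (U - X)) \<le> 2"
        using PU PX ec'[OF ne s1(2)] by auto
      then have "?P (U - X)" using ec'[OF UX2 s1(1)] s1 UX2 by auto
      moreover have "card (U - X) < card U"
        using UX1 fU by (intro psubset_card_mono) auto
      ultimately have False using mn[rule_format, of "U - X"] by linarith
      then show ?thesis ..
    qed
  qed
qed

lemma robbins:
  assumes "finite V" "finite E" "wfg V E t h" "twoec V E t h"
  shows "\<exists>B\<subseteq>E. strong V E B t h"
  using assms
proof (induction "card V + card E" arbitrary: V E t h rule: less_induct)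
  case less
  show ?case
  proof (cases "card V \<le> 1")
    case True
    have "strong V E {} t h" unfolding strong_def
    proof (intro allI impI)
      fix W assume W: "W \<noteq> {} \<and> W \<subset> V"
      then have "card W < card V" using less.prems(1) psubset_card_mono by blast
      with True have "card W = 0" by simp
      moreover have "finite W" using W less.prems(1) finite_subset by blast
      ultimately show "\<exists>e\<in>E. ot {} t h e \<in> W \<and> oh {} t h e \<notin> W" using W by simp
    qed
    then show ?thesis by blast
  next
    case big: False
    show ?thesis
    proof (cases "\<exists>e\<in>E. twoec V (E - {e}) t h")
      case True
      then obtain e where e: "e\<in>E" "twoec V (E-{e}) t h" by blast
      have "card (E-{e}) < card E" using card_Diff1_less[OF less.prems(2) e(1)] .
      then have lt: "card V + card (E-{e}) < card V + card E" by simp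
      have "wfg V (E-{e}) t h" using less.prems(3) unfolding wfg_def by auto
      then obtain B where B: "B \<subseteq> E-{e}" "strong V (E-{e}) B t h"
        using less.hyps[OF lt] less.prems(1) less.prems(2) e(2) by blast
      then have "strong V E B t h" unfolding strong_def by blast
      then show ?thesis using B by blast
    next
      case False
      have crit: "\<forall>e\<in>E. \<exists>U. U\<noteq>{} \<and> U\<subset>V \<and> card (cross E t h U) = 2 \<and> e \<in> cross E t h U"
      proof
        fix e assume eE: "e\<in>E"
        from False eE obtain U where U: "U \<noteq>{}" "U\<subset>V" "card (cross (E-{e}) t h U) < 2"
          unfolding twoec_def by (meson not_le)
        have eq: "cross (E-{e}) t h U = cross E t h U - {e}" unfolding cross_def by auto
        have ge: "2 \<le> card (cross E t h U)" using less.prems(4) U unfolding twoec_def by blast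
        have fin: "finite (cross E t h U)" using finite_cross less.prems(2) by blast
        have ein: "e \<in> cross E t h U"
        proof (rule ccontr)
          assume "e \<notin> cross E t h U"
          then have "cross E t h U - {e} = cross E t h U" by simp
          with U(3) eq ge show False by simp
        qed
        have "card (cross E t h U - {e}) = card (cross E t h U) - 1" using ein fin by simp
        then have "card (cross E t h U) = 2" using U(3) eq ge by simp
        then show "\<exists>U. U\<noteq>{} \<and> U\<subset>V \<and> card (cross E t h U) = 2 \<and> e \<in> cross E t h U"
          using U ein by blast
      qed
      have c2: "card V \<ge> 2" using big by simp
      obtain x where x: "x\<in>V" "card (cross E t h {x}) = 2" using deg2[OF less.prems c2 crit] by blast
      then obtain e1 e2 where e12: "cross E t h {x} = {e1,e2}" "e1\<noteq>e2" by (auto simp: card_2_iff)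
      have wf: "\<And>e. e\<in>E \<Longrightarrow> t e \<in> V \<and> h e \<in> V \<and> t e \<noteq> h e"
        using less.prems(3) unfolding wfg_def by blast
      have inc: "f = e1 \<or> f = e2" if "f\<in>E" "t f = x \<or> h f = x" for f
      proof -
        have "f \<in> cross E t h {x}" using wf[of f] that unfolding cross_def by auto
        then show ?thesis using e12 by auto
      qed
      have "e1 \<in> cross E t h {x}" "e2 \<in> cross E t h {x}" using e12 by auto
      then have e1: "e1 \<in> E" "t e1 = x \<or> h e1 = x" and e2: "e2 \<in> E" "t e2 = x \<or> h e2 = x"
        unfolding cross_def by auto
      define a where "a = (if t e1 = x then h e1 else t e1)"
      have aV: "a \<in> V" "a \<noteq> x" using wf[OF e1(1)] e1(2) unfolding a_def by auto
      define phi where "phi = (\<lambda>y. if y = x then a else y)"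
      define V' where "V' = V - {x}"
      define E' where "E' = {e\<in>E. phi (t e) \<noteq> phi (h e)}"
      have e1E': "e1 \<notin> E'" using e1(2) unfolding E'_def phi_def a_def by auto
      have fV': "finite V'" "finite E'" using less.prems(1,2) unfolding V'_def E'_def by auto
      have E'E: "E' \<subseteq> E" unfolding E'_def by auto
      have lt: "card V' + card E' < card V + card E"
      proof -
        have "card V' < card V" unfolding V'_def using card_Diff1_less[OF less.prems(1) x(1)] .
        moreover have "card E' \<le> card E" using E'E less.prems(2) by (simp add: card_mono)
        ultimately show ?thesis by simp
      qed
      have wf': "wfg V' E' (phi \<circ> t) (phi \<circ> h)" unfolding wfg_def V'_def E'_def phi_def using wf aV by auto
      have ec': "twoec V' E' (phi \<circ> t) (phi \<circ> h)"
        unfolding twoec_def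
      proof (intro allI impI)
        fix U' assume U': "U' \<noteq> {} \<and> U' \<subset> V'"
        define U where "U = U' \<union> (if a \<in> U' then {x} else {})"
        have mem: "\<And>y. y \<in> V \<Longrightarrow> (phi y \<in> U') = (y \<in> U)" using U' unfolding U_def phi_def V'_def by auto
        have "cross E' (phi \<circ> t) (phi \<circ> h) U' = cross E t h U"
        proof (rule set_eqI)
          fix e show "e \<in> cross E' (phi \<circ> t) (phi \<circ> h) U' \<longleftrightarrow> e \<in> cross E t h U"
            unfolding cross_def E'_def using mem[of "t e"] mem[of "h e"] wf[of e] by auto
        qed
        moreover have "U \<noteq> {}" "U \<subset> V" using U' aV x(1) unfolding U_def V'_def by auto
        ultimately show "2 \<le> card (cross E' (phi \<circ> t) (phi \<circ> h) U')"
          using less.prems(4) unfolding twoec_def by auto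
      qed
      obtain B' where B': "B' \<subseteq> E'" "strong V' E' B' (phi \<circ> t) (phi \<circ> h)"
        using less.hyps[OF lt fV' wf' ec'] by blast
      have otphi: "\<And>f. ot B' (phi \<circ> t) (phi \<circ> h) f = phi (ot B' t h f)"
        "\<And>f. oh B' (phi \<circ> t) (phi \<circ> h) f = phi (oh B' t h f)" unfolding ot_def oh_def by auto
      define B where "B = B' \<union> (if (if ot B' t h e2 = x then t e1 = x else h e1 = x) then {e1} else {})"
      have BE: "B \<subseteq> E" using B' E'E e1 unfolding B_def by auto
      have agree: "\<And>f. f \<noteq> e1 \<Longrightarrow> ot B t h f = ot B' t h f \<and> oh B t h f = oh B' t h f"
        unfolding B_def ot_def oh_def by auto
      have e1B': "e1 \<notin> B'" using B'(1) e1E' by auto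
      have e1dir: "if ot B t h e2 = x then oh B t h e1 = x \<and> ot B t h e1 = a else ot B t h e1 = x \<and> oh B t h e1 = a"
        using agree[OF e12(2)[symmetric]] e1B' e1(2) wf[OF e1(1)] unfolding B_def ot_def oh_def a_def by auto
      have oV: "ot B t h f \<in> V \<and> oh B t h f \<in> V \<and> ot B t h f \<noteq> oh B t h f
          \<and> ((ot B t h f = x \<or> oh B t h f = x) = (t f = x \<or> h f = x))" if "f\<in>E" for f
        unfolding ot_def oh_def using wf[OF that] by auto
      have IH': "\<exists>f\<in>E'. phi (ot B t h f) \<in> W' \<and> phi (oh B t h f) \<notin> W'"
        if "W' \<noteq> {}" "W' \<subseteq> V" "x \<notin> W'" "\<exists>y\<in>V. y \<noteq> x \<and> y \<notin> W'" for W'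
      proof -
        have "W' \<noteq> {} \<and> W' \<subset> V'" using that unfolding V'_def by auto
        then obtain f where f: "f\<in>E'" "ot B' (phi \<circ> t) (phi \<circ> h) f \<in> W'" "oh B' (phi \<circ> t) (phi \<circ> h) f \<notin> W'"
          using B'(2) unfolding strong_def by blast
        have "f \<noteq> e1" using f(1) e1E' by auto
        then show ?thesis using f agree otphi by metis
      qed
      have far: "ot B t h f \<noteq> x \<and> oh B t h f \<noteq> x" if "f \<in> E'" "f \<noteq> e2" for f
      proof -
        have "f \<in> E" "f \<noteq> e1" using that E'E e1E' by auto
        then show ?thesis using inc[of f] oV[of f] that(2) by blast
      qed
      show ?thesis
      proof (rule exI[of _ B], intro conjI BE, unfold strong_def, intro allI impI)
        fix W assume W: "W \<noteq> {} \<and> W \<subset> V"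
        show "\<exists>e\<in>E. ot B t h e \<in> W \<and> oh B t h e \<notin> W"
        proof (cases "(x \<in> W) = (a \<in> W)")
          case True
          have ne: "W - {x} \<noteq> {}" using True W aV by auto
          have pr: "\<exists>y\<in>V. y \<noteq> x \<and> y \<notin> W - {x}" using True W aV by auto
          obtain f where f: "f\<in>E'" "phi (ot B t h f) \<in> W - {x}" "phi (oh B t h f) \<notin> W - {x}"
            using IH'[OF ne _ _ pr] W by auto
          have mem: "\<And>y. (phi y \<in> W - {x}) = (y \<in> W)" using True aV unfolding phi_def by auto
          show ?thesis using f mem E'E by blast
        next
          case False
          show ?thesis
          proof (cases "x \<in> W")
            case xW: True
            with False have aW: "a \<notin> W" by simp
            show ?thesis
            proof (cases "ot B t h e2 = x")
              case o2: True
              show ?thesis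
              proof (cases "oh B t h e2 \<in> W")
                case False then show ?thesis using o2 xW e2 by auto
              next
                case bW: True
                have ne: "W - {x} \<noteq> {}" using bW oV[OF e2(1)] o2 by auto
                have pr: "\<exists>y\<in>V. y \<noteq> x \<and> y \<notin> W - {x}" using aV aW by auto
                obtain f where f: "f\<in>E'" "phi (ot B t h f) \<in> W - {x}" "phi (oh B t h f) \<notin> W - {x}"
                  using IH'[OF ne _ _ pr] W by auto
                have "f \<noteq> e2" using f(2) o2 aW unfolding phi_def by auto
                with far f(1) have "ot B t h f \<noteq> x" "oh B t h f \<noteq> x" by auto
                then show ?thesis using f E'E unfolding phi_def by auto
              qed
            next
              case o2: False
              then have "ot B t h e1 = x" "oh B t h e1 = a" using e1dir by auto
              then show ?thesis using xW aW e1 by auto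
            qed
          next
            case xW: False
            with False have aW: "a \<in> W" by simp
            show ?thesis
            proof (cases "ot B t h e2 = x")
              case o2: True
              then have "oh B t h e1 = x" "ot B t h e1 = a" using e1dir by auto
              then show ?thesis using xW aW e1 by auto
            next
              case o2: False
              have oh2: "oh B t h e2 = x" using oV[OF e2(1)] e2(2) o2 by auto
              show ?thesis
              proof (cases "ot B t h e2 \<in> W")
                case True then show ?thesis using oh2 xW e2 by auto
              next
                case bW: False
                have ne: "W \<noteq> {}" using W by auto
                have pr: "\<exists>y\<in>V. y \<noteq> x \<and> y \<notin> W" using bW o2 oV[OF e2(1)] by auto
                obtain f where f: "f\<in>E'" "phi (ot B t h f) \<in> W" "phi (oh B t h f) \<notin> W"
                  using IH'[OF ne _ xW pr] W by auto
                have "f \<noteq> e2" using f(3) oh2 aW unfolding phi_def by auto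
                with far f(1) have "ot B t h f \<noteq> x" "oh B t h f \<noteq> x" by auto
                then show ?thesis using f E'E unfolding phi_def by auto
              qed
            qed
          qed
        qed
      qed
    qed
  qed
qed

lemma dicutI:
  assumes "U \<noteq> {}" "U \<subset> verts G" "\<forall>e\<in>arcs G. \<not> (tail G e \<notin> U \<and> head G e \<in> U)"
  shows "is_dicut G (out_cut G U)"
  unfolding is_dicut_def using assms by blast

theorem corollary1:
  fixes G :: "('a,'b) pre_digraph"
  assumes "fin_digraph G" and "loopfree_digraph G"
    and "min_dicut_size G 2"
  shows "\<exists>J1 J2. is_dijoin G J1 \<and> is_dijoin G J2 \<and> J1 \<inter> J2 = {}"
proof -
  interpret fin_digraph G by fact
  interpret loopfree_digraph G by fact
  have dic: "\<And>C. is_dicut G C \<Longrightarrow> 2 \<le> card C" using assms(3) unfolding min_dicut_size_def by blast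
  have wf: "wfg (verts G) (arcs G) (tail G) (head G)" unfolding wfg_def using no_loops by auto
  have ec: "twoec (verts G) (arcs G) (tail G) (head G)" unfolding twoec_def
  proof (intro allI impI)
    fix U assume U: "U \<noteq> {} \<and> U \<subset> verts G"
    let ?X = "cross (arcs G) (tail G) (head G) U"
    show "2 \<le> card ?X"
    proof (rule ccontr)
      assume "\<not> 2 \<le> card ?X"
      then have le1: "card ?X = 0 \<or> card ?X = 1" by linarith
      have fin: "finite ?X" using finite_cross finite_arcs by blast
      show False
      proof (cases "card ?X = 0")
        case True
        then have X0: "?X = {}" using fin by simp
        have X0': "(tail G f \<in> U) = (head G f \<in> U)" if "f \<in> arcs G" for f
        proof (rule ccontr)
          assume "(tail G f \<in> U) \<noteq> (head G f \<in> U)"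
          then have "f \<in> ?X" using that unfolding cross_def by simp
          then show False using X0 by simp
        qed
        have "\<forall>e\<in>arcs G. \<not> (tail G e \<notin> U \<and> head G e \<in> U)"
        proof
          fix e assume "e \<in> arcs G"
          then show "\<not> (tail G e \<notin> U \<and> head G e \<in> U)" using X0'[of e] by simp
        qed
        then have "is_dicut G (out_cut G U)" using dicutI[of U G] U by simp
        moreover have "out_cut G U = {}"
        proof -
          have "e \<notin> out_cut G U" for e
          proof
            assume "e \<in> out_cut G U"
            then have "e \<in> arcs G" "tail G e \<in> U" "head G e \<notin> U" unfolding out_cut_def by simp_all
            then show False using X0'[of e] by simp
          qed
          then show ?thesis by blast
        qed
        ultimately show False using dic[of "out_cut G U"] by simp
      next
        case False
        with le1 have "card ?X = 1" by simp
        then obtain e where Xe: "?X = {e}" using card_1_singletonE by blast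
        have eX: "e \<in> ?X" using Xe by simp
        then have eA: "e \<in> arcs G" and ecr: "(tail G e \<in> U) \<noteq> (head G e \<in> U)" unfolding cross_def by simp_all
        have onlye: "f = e" if "f \<in> arcs G" "(tail G f \<in> U) \<noteq> (head G f \<in> U)" for f
        proof -
          have "f \<in> ?X" using that unfolding cross_def by simp
          then show ?thesis using Xe by simp
        qed
        show False
        proof (cases "tail G e \<in> U")
          case True
          have "\<forall>f\<in>arcs G. \<not> (tail G f \<notin> U \<and> head G f \<in> U)"
          proof (intro ballI notI)
            fix f assume f: "f \<in> arcs G" "tail G f \<notin> U \<and> head G f \<in> U"
            then have "f = e" using onlye[of f] by blast
            then show False using f True by simp
          qed
          then have "is_dicut G (out_cut G U)" using dicutI[of U G] U by simp
          moreover have "out_cut G U = {e}"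
          proof (rule set_eqI, rule iffI)
            fix f assume "f \<in> out_cut G U"
            then have "f \<in> arcs G" "tail G f \<in> U" "head G f \<notin> U" unfolding out_cut_def by auto
            then show "f \<in> {e}" using onlye[of f] by simp
          next
            fix f assume "f \<in> {e}"
            then show "f \<in> out_cut G U" using True ecr eA unfolding out_cut_def by simp
          qed
          ultimately show False using dic[of "out_cut G U"] by simp
        next
          case False
          let ?W = "verts G - U"
          have "\<forall>f\<in>arcs G. \<not> (tail G f \<notin> ?W \<and> head G f \<in> ?W)"
          proof (intro ballI notI)
            fix f assume f: "f \<in> arcs G" "tail G f \<notin> ?W \<and> head G f \<in> ?W"
            then have "tail G f \<in> U" "head G f \<notin> U" by auto
            then have "f = e" using onlye[of f] f(1) by blast
            then show False using \<open>tail G f \<in> U\<close> False by simp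
          qed
          moreover have "?W \<noteq> {}" "?W \<subset> verts G" using U by auto
          ultimately have "is_dicut G (out_cut G ?W)" using dicutI[of ?W G] by simp
          moreover have "out_cut G ?W = {e}"
          proof (rule set_eqI, rule iffI)
            fix f assume "f \<in> out_cut G ?W"
            then have "f \<in> arcs G" "tail G f \<notin> U" "head G f \<in> U" unfolding out_cut_def by auto
            then show "f \<in> {e}" using onlye[of f] by simp
          next
            fix f assume "f \<in> {e}"
            then show "f \<in> out_cut G ?W" using False ecr eA unfolding out_cut_def by simp
          qed
          ultimately show False using dic[of "out_cut G ?W"] by simp
        qed
      qed
    qed
  qed
  obtain B where B: "B \<subseteq> arcs G" "strong (verts G) (arcs G) B (tail G) (head G)"
    using robbins[OF finite_verts finite_arcs wf ec] by blast
  have key: "B \<inter> C \<noteq> {} \<and> (arcs G - B) \<inter> C \<noteq> {}" if "is_dicut G C" for C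
  proof -
    have "\<exists>U. U \<noteq> {} \<and> U \<subset> verts G \<and> (\<forall>e \<in> arcs G. \<not> (tail G e \<notin> U \<and> head G e \<in> U))
      \<and> C = out_cut G U" using that unfolding is_dicut_def .
    then obtain U where UU: "U \<noteq> {} \<and> U \<subset> verts G \<and> (\<forall>e \<in> arcs G. \<not> (tail G e \<notin> U \<and> head G e \<in> U))
      \<and> C = out_cut G U" by (rule exE)
    note U = conjunct1[OF UU] conjunct1[OF conjunct2[OF UU]] conjunct1[OF conjunct2[OF conjunct2[OF UU]]]
    note C = conjunct2[OF conjunct2[OF conjunct2[OF UU]]]
    have "\<exists>e\<in>arcs G. ot B (tail G) (head G) e \<in> U \<and> oh B (tail G) (head G) e \<notin> U"
      using B(2)[unfolded strong_def, rule_format, of U] U(1,2) by simp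
    then obtain e where e: "e \<in> arcs G" "ot B (tail G) (head G) e \<in> U" "oh B (tail G) (head G) e \<notin> U"
      by blast
    have "e \<notin> B"
    proof
      assume "e \<in> B"
      then have "head G e \<in> U" "tail G e \<notin> U" using e(2,3) unfolding ot_def oh_def by simp_all
      then show False using U(3) e(1) by blast
    qed
    then have e1: "e \<in> (arcs G - B) \<inter> C" using e unfolding C out_cut_def ot_def oh_def by auto
    have W: "verts G - U \<noteq> {}" "verts G - U \<subset> verts G" using U by auto
    have "\<exists>f\<in>arcs G. ot B (tail G) (head G) f \<in> verts G - U \<and> oh B (tail G) (head G) f \<notin> verts G - U"
      using B(2)[unfolded strong_def, rule_format, of "verts G - U"] W by simp
    then obtain f where f: "f \<in> arcs G" "ot B (tail G) (head G) f \<in> verts G - U" "oh B (tail G) (head G) f \<notin> verts G - U"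
      by blast
    have "f \<in> B"
    proof (rule ccontr)
      assume "f \<notin> B"
      then have "tail G f \<notin> U" "head G f \<in> U" using f(2,3) f(1) unfolding ot_def oh_def by simp_all
      then show False using U(3) f(1) by blast
    qed
    then have "f \<in> B \<inter> C" using f unfolding C out_cut_def ot_def oh_def by auto
    then show ?thesis using e1 by blast
  qed
  show ?thesis
  proof (intro exI conjI)
    show "is_dijoin G B" unfolding is_dijoin_def using B(1) key by blast
    show "is_dijoin G (arcs G - B)" unfolding is_dijoin_def using key by blast
  qed auto
qed

end
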